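(* Let $G$ be a regular graph and let $H$ be a graph that is not isomorphic to the edgeless graph $\overline{K_n}$ for any odd $n$. Then the lexicographic product $G\circ H$ is a balanced distance magic graph if and only if $H$ is a balanced distance magic graph.
   Context: All graphs are finite and simple. For a graph $G$ and vertex $x$, $N(x)=N_G(x)$ is the (open) neighborhood of $x$. A distance magic labeling of a graph $G$ of order $N$ is a bijection $\ell\colon V(G)\to\{1,\dots,N\}$ for which there is a constant $k$ such that the weight $w(x)=\sum_{y\in N(x)}\ell(y)$ equals $k$ for every $x\in V(G)$. A balanced distance magic labeling of a graph $G$ with an even number $N$ of vertices is a distance magic labeling $\ell$ such that for every $w\in V(G)$: whenever $u\in N(w)$ has $\ell(u)=i$, there is $v\in N(w)$ with $\ell(v)=N+1-i$. The vertices labeled $i$ and $N+1-i$ are called twins. $G$ is a balanced distance magic graph if it has an even number of vertices and admits a balanced distance magic labeling (in particular, an edgeless graph with an even number of vertices is balanced distance magic). The lexicographic product $G\circ H$ has vertex set $V(G)\times V(H)$, with $(g,h)$ adjacent to $(g',h')$ iff either $gg'\in E(G)$, or $g=g'$ and $hh'\in E(H)$. *)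

theory Defs
  imports Main
begin

definition graph :: "'a set \<Rightarrow> ('a \<Rightarrow> 'a \<Rightarrow> bool) \<Rightarrow> bool" where
  "graph V E \<longleftrightarrow> finite V \<and> V \<noteq> {} \<and>
     (\<forall>x y. E x y \<longrightarrow> x \<in> V \<and> y \<in> V) \<and>
     (\<forall>x y. E x y \<longrightarrow> E y x) \<and> (\<forall>x. \<not> E x x)"

definition nbhd :: "'a set \<Rightarrow> ('a \<Rightarrow> 'a \<Rightarrow> bool) \<Rightarrow> 'a \<Rightarrow> 'a set" where
  "nbhd V E x = {y \<in> V. E x y}"

definition regular :: "'a set \<Rightarrow> ('a \<Rightarrow> 'a \<Rightarrow> bool) \<Rightarrow> bool" where
  "regular V E \<longleftrightarrow> (\<exists>r. \<forall>x\<in>V. card (nbhd V E x) = r)"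

definition graph_iso :: "'a set \<Rightarrow> ('a \<Rightarrow> 'a \<Rightarrow> bool) \<Rightarrow> 'b set \<Rightarrow> ('b \<Rightarrow> 'b \<Rightarrow> bool) \<Rightarrow> bool" where
  "graph_iso V1 E1 V2 E2 \<longleftrightarrow>
     (\<exists>f. bij_betw f V1 V2 \<and> (\<forall>x\<in>V1. \<forall>y\<in>V1. E1 x y \<longleftrightarrow> E2 (f x) (f y)))"

definition edgeless_V :: "nat \<Rightarrow> nat set" where
  "edgeless_V n = {..<n}"

definition edgeless_E :: "nat \<Rightarrow> nat \<Rightarrow> bool" where
  "edgeless_E x y = False"

definition distance_magic_labeling :: "'a set \<Rightarrow> ('a \<Rightarrow> 'a \<Rightarrow> bool) \<Rightarrow> ('a \<Rightarrow> nat) \<Rightarrow> bool" where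
  "distance_magic_labeling V E l \<longleftrightarrow>
     bij_betw l V {1..card V} \<and> (\<exists>k. \<forall>x\<in>V. (\<Sum>y\<in>nbhd V E x. l y) = k)"

definition balanced_dm_labeling :: "'a set \<Rightarrow> ('a \<Rightarrow> 'a \<Rightarrow> bool) \<Rightarrow> ('a \<Rightarrow> nat) \<Rightarrow> bool" where
  "balanced_dm_labeling V E l \<longleftrightarrow> even (card V) \<and> distance_magic_labeling V E l \<and>
     (\<forall>w\<in>V. \<forall>u\<in>nbhd V E w. \<exists>v\<in>nbhd V E w. l v = card V + 1 - l u)"

definition balanced_distance_magic :: "'a set \<Rightarrow> ('a \<Rightarrow> 'a \<Rightarrow> bool) \<Rightarrow> bool" where
  "balanced_distance_magic V E \<longleftrightarrow> even (card V) \<and> (\<exists>l. balanced_dm_labeling V E l)"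

definition lex_V :: "'a set \<Rightarrow> 'b set \<Rightarrow> ('a \<times> 'b) set" where
  "lex_V VG VH = VG \<times> VH"

definition lex_E :: "('a \<Rightarrow> 'a \<Rightarrow> bool) \<Rightarrow> ('b \<Rightarrow> 'b \<Rightarrow> bool) \<Rightarrow> ('a \<times> 'b) \<Rightarrow> ('a \<times> 'b) \<Rightarrow> bool" where
  "lex_E EG EH p q \<longleftrightarrow> EG (fst p) (fst q) \<or> (fst p = fst q \<and> EH (snd p) (snd q))"

end

theory Submission
  imports Defs
begin

definition invol :: "'a set \<Rightarrow> ('a \<Rightarrow> 'a) \<Rightarrow> bool" where
  "invol S t \<longleftrightarrow> (\<forall>x\<in>S. t x \<in> S \<and> t x \<noteq> x \<and> t (t x) = x)"

lemma invol_remove: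
  assumes "invol S t" "x \<in> S"
  shows "invol (S - {x, t x}) t"
  unfolding invol_def
proof
  fix y assume y: "y \<in> S - {x, t x}"
  have h: "t y \<in> S" "t y \<noteq> y" "t (t y) = y" "t (t x) = x" using assms y unfolding invol_def by auto
  have a: "t y \<noteq> x"
  proof
    assume "t y = x" hence "y = t x" using h(3) by simp
    thus False using y by simp
  qed
  have b: "t y \<noteq> t x"
  proof
    assume "t y = t x" hence "y = x" using h(3,4) by metis
    thus False using y by simp
  qed
  show "t y \<in> S - {x, t x} \<and> t y \<noteq> y \<and> t (t y) = y" using h a b by simp
qed

lemma invol_card:
  assumes "finite S" "invol S t" "x \<in> S"
  shows "card (S - {x, t x}) + 2 = card S"
proof -
  have "{x, t x} \<subseteq> S" "card {x, t x} = 2" using assms unfolding invol_def by auto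
  moreover have "card {x, t x} \<le> card S" using assms(1) calculation(1) card_mono by blast
  moreover have "card (S - {x, t x}) = card S - card {x, t x}"
    by (rule card_Diff_subset) (use calculation(1) in auto)
  ultimately show ?thesis by linarith
qed

lemma inv_even:
  "finite S \<Longrightarrow> invol S t \<Longrightarrow> even (card S)"
proof (induction "card S" arbitrary: S rule: less_induct)
  case less
  show ?case
  proof (cases "S = {}")
    case True thus ?thesis by simp
  next
    case False then obtain x where x: "x \<in> S" by blast
    have c: "card (S - {x, t x}) + 2 = card S" using invol_card[OF less.prems x] .
    have lt: "card (S - {x, t x}) < card S" using c by linarith
    have "even (card (S - {x, t x}))"
      by (rule less.hyps[OF lt]) (use less.prems invol_remove[OF less.prems(2) x] in auto)
    thus ?thesis using c by (metis even_add even_numeral)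
  qed
qed

lemma inv_label:
  "finite S \<Longrightarrow> invol S t \<Longrightarrow> \<exists>l. bij_betw l S {1..card S} \<and> (\<forall>u\<in>S. l (t u) = card S + 1 - l u)"
proof (induction "card S" arbitrary: S rule: less_induct)
  case less
  show ?case
  proof (cases "S = {}")
    case True thus ?thesis by (simp add: bij_betw_def)
  next
    case False then obtain x where x: "x \<in> S" by blast
    define S' where "S' = S - {x, t x}"
    define N where "N = card S"
    have c: "card S' + 2 = N" using invol_card[OF less.prems x] S'_def N_def by simp
    have iS': "invol S' t" using invol_remove[OF less.prems(2) x] S'_def by simp
    obtain l' where l': "bij_betw l' S' {1..card S'}" "\<forall>u\<in>S'. l' (t u) = card S' + 1 - l' u"
      using less.hyps[of S'] c less.prems iS' N_def S'_def by fastforce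
    have tx: "t x \<in> S" "t x \<noteq> x" "t (t x) = x" using less.prems(2) x unfolding invol_def by auto
    define l where "l y = (if y = x then 1 else if y = t x then N else Suc (l' y))" for y
    have img': "l ` S' = Suc ` l' ` S'" unfolding l_def S'_def by (auto simp: image_iff)
    have Sdec: "S = insert x (insert (t x) S')" using x tx unfolding S'_def by auto
    have "l ` S = {1, N} \<union> l ` S'" using Sdec tx unfolding l_def by auto
    also have "\<dots> = {1, N} \<union> {2..N-1}" using img' l'(1) c[symmetric] by (simp add: bij_betw_def numeral_2_eq_2)
    also have "\<dots> = {1..N}" using c by auto
    finally have img: "l ` S = {1..N}" .
    have "inj_on l S" by (rule eq_card_imp_inj_on) (simp_all add: less.prems(1) img N_def)
    hence bij: "bij_betw l S {1..N}" unfolding bij_betw_def using img by simp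
    have "\<forall>u\<in>S. l (t u) = N + 1 - l u"
    proof
      fix u assume u: "u \<in> S"
      show "l (t u) = N + 1 - l u"
      proof (cases "u = x \<or> u = t x")
        case True thus ?thesis using tx c unfolding l_def by auto
      next
        case False
        hence uS': "u \<in> S'" using u S'_def by auto
        hence tuS': "t u \<in> S'" using iS'[unfolded invol_def] by simp
        have "t u \<noteq> x" "t u \<noteq> t x" using tuS' S'_def by auto
        moreover have "l' u \<in> {1..card S'}" using l'(1) uS' bij_betwE by blast
        ultimately show ?thesis using False l'(2) uS' c unfolding l_def by auto
      qed
    qed
    thus ?thesis using bij N_def by blast
  qed
qed

lemma even_inv:
  "finite S \<Longrightarrow> even (card S) \<Longrightarrow> \<exists>t. invol S t"
proof (induction "card S" arbitrary: S rule: less_induct)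
  case less
  show ?case
  proof (cases "S = {}")
    case True thus ?thesis by (intro exI[of _ id]) (simp add: invol_def)
  next
    case False then obtain x where x: "x \<in> S" by blast
    have c1: "card S \<noteq> 1" using less.prems by auto
    have "S - {x} \<noteq> {}"
    proof
      assume "S - {x} = {}" hence "S = {x}" using x by auto
      thus False using c1 by simp
    qed
    then obtain y where y: "y \<in> S" "y \<noteq> x" by blast
    define S' where "S' = S - {x, y}"
    have sub: "{x, y} \<subseteq> S" "card {x, y} = 2" using x y by auto
    have c: "card S' + 2 = card S"
    proof -
      have "card {x, y} \<le> card S" using less.prems(1) sub(1) card_mono by blast
      thus ?thesis unfolding S'_def using less.prems(1) sub by (simp add: card_Diff_subset)
    qed
    have evS': "even (card S')" using c less.prems(2) by presburger
    have lt: "card S' < card S" using c by simp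
    have "finite S'" using less.prems(1) S'_def by simp
    then obtain t' where t': "invol S' t'" using less.hyps[OF lt _ evS'] by blast
    define t where "t = t'(x := y, y := x)"
    have "invol S t" unfolding invol_def
    proof
      fix z assume z: "z \<in> S"
      show "t z \<in> S \<and> t z \<noteq> z \<and> t (t z) = z"
      proof (cases "z = x \<or> z = y")
        case True thus ?thesis using x y unfolding t_def by auto
      next
        case False
        hence zS: "z \<in> S'" using z S'_def by auto
        hence "t' z \<in> S'" "t' z \<noteq> z" "t' (t' z) = z" using t'[unfolded invol_def] by simp_all
        moreover hence "t' z \<noteq> x" "t' z \<noteq> y" using S'_def by auto
        ultimately show ?thesis using False S'_def unfolding t_def by auto
      qed
    qed
    thus ?thesis by blast
  qed
qed

lemma sum_invol:
  assumes "\<And>x. x \<in> S \<Longrightarrow> t x \<in> S \<and> t (t x) = x"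
  shows "sum (\<lambda>u. f (t u)) S = sum f S"
  by (rule sum.reindex_bij_witness[where i=t and j=t]) (use assms in auto)


definition sgraph :: "'a set \<Rightarrow> ('a \<Rightarrow> 'a \<Rightarrow> bool) \<Rightarrow> bool" where
  "sgraph V E \<longleftrightarrow> finite V \<and> (\<forall>x\<in>V. \<forall>y\<in>V. E x y \<longrightarrow> E y x)"

definition cls :: "'a set \<Rightarrow> ('a \<Rightarrow> 'a \<Rightarrow> bool) \<Rightarrow> 'a \<Rightarrow> 'a set" where
  "cls V E x = {y \<in> V. nbhd V E y = nbhd V E x}"

lemma char_dir1:
  assumes g: "sgraph V E" and b: "balanced_distance_magic V E"
  shows "regular V E \<and> (\<forall>x\<in>V. even (card (cls V E x)))"
proof -
  have fin: "finite V" using g unfolding sgraph_def by blast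
  define N where "N = card V"
  obtain l where ev: "even N" and bl: "balanced_dm_labeling V E l"
    using b unfolding balanced_distance_magic_def N_def by blast
  have bij: "bij_betw l V {1..N}" and bal: "\<forall>w\<in>V. \<forall>u\<in>nbhd V E w. \<exists>v\<in>nbhd V E w. l v = N + 1 - l u"
    using bl unfolding balanced_dm_labeling_def distance_magic_labeling_def N_def by auto
  obtain k where wk: "\<forall>x\<in>V. (\<Sum>y\<in>nbhd V E x. l y) = k"
    using bl unfolding balanced_dm_labeling_def distance_magic_labeling_def by auto
  define t where "t u = inv_into V l (N + 1 - l u)" for u
  have inj: "inj_on l V" using bij bij_betw_def by blast
  have T: "t u \<in> V \<and> l (t u) = N + 1 - l u" if u: "u \<in> V" for u
  proof -
    have "l u \<in> {1..N}" using bij u bij_betwE by blast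
    hence "N + 1 - l u \<in> l ` V" using bij by (auto simp: bij_betw_def)
    thus ?thesis unfolding t_def by (simp add: inv_into_into f_inv_into_f)
  qed
  have iv: "invol V t" unfolding invol_def
  proof
    fix u assume u: "u \<in> V"
    have lu: "l u \<in> {1..N}" using bij u bij_betwE by blast
    have "t u \<noteq> u"
    proof
      assume "t u = u" hence "l u = N + 1 - l u" using T[OF u] by simp
      hence "2 * l u = N + 1" using lu by auto
      thus False using ev by presburger
    qed
    moreover have "t (t u) = u"
    proof -
      have a: "t u \<in> V" "l (t u) = N + 1 - l u" using T[OF u] by simp_all
      have b: "t (t u) \<in> V" "l (t (t u)) = N + 1 - l (t u)" using T[OF a(1)] by simp_all
      have "l (t (t u)) = l u" using a(2) b(2) lu by simp
      thus ?thesis using inj_onD[OF inj _ b(1) u] by simp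
    qed
    ultimately show "t u \<in> V \<and> t u \<noteq> u \<and> t (t u) = u" using T[OF u] by simp
  qed
  have nbV: "nbhd V E w \<subseteq> V" for w unfolding nbhd_def by auto
  have clos: "t u \<in> nbhd V E w" if "w \<in> V" "u \<in> nbhd V E w" for u w
  proof -
    have "\<exists>v\<in>nbhd V E w. l v = N + 1 - l u" using bal that by simp
    then obtain v where v: "v \<in> nbhd V E w" "l v = N + 1 - l u" by (rule bexE)
    have uV: "u \<in> V" and vV: "v \<in> V" using that v nbV by auto
    have tu: "t u \<in> V" "l (t u) = N + 1 - l u" using T[OF uV] by simp_all
    have "l v = l (t u)" using v(2) tu(2) by simp
    hence "v = t u" using inj_onD[OF inj _ vV tu(1)] by simp
    thus ?thesis using v by simp
  qed
  have clos2: "t u \<in> nbhd V E w \<longleftrightarrow> u \<in> nbhd V E w" if "w \<in> V" "u \<in> V" for u w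
    using clos[OF that(1), of "t u"] clos[OF that(1), of u] iv that(2) unfolding invol_def by metis
  have sym: "\<And>x y. x \<in> V \<Longrightarrow> y \<in> V \<Longrightarrow> E x y \<Longrightarrow> E y x"
    using g unfolding sgraph_def by auto
  have memnb: "z \<in> nbhd V E y \<longleftrightarrow> z \<in> V \<and> y \<in> nbhd V E z" if "y \<in> V" for y z
    using sym that unfolding nbhd_def by blast
  have nbt: "nbhd V E (t u) = nbhd V E u" if "u \<in> V" for u
  proof -
    have tu: "t u \<in> V" using T that by blast
    show ?thesis
    proof (rule set_eqI)
      fix z show "z \<in> nbhd V E (t u) \<longleftrightarrow> z \<in> nbhd V E u"
        using memnb[OF tu, of z] memnb[OF that, of z] clos2[of z u] that by blast
    qed
  qed
  have "even (card (cls V E x))" if x: "x \<in> V" for x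
  proof (rule inv_even[where t = t])
    show "finite (cls V E x)" using fin unfolding cls_def by simp
    show "invol (cls V E x) t" using iv nbt unfolding invol_def cls_def by auto
  qed
  moreover have "regular V E"
    unfolding regular_def
  proof (intro exI ballI)
    fix w assume w: "w \<in> V"
    define S where "S = nbhd V E w"
    have finS: "finite S" using fin nbV S_def finite_subset by blast
    have tS: "\<And>x. x \<in> S \<Longrightarrow> t x \<in> S \<and> t (t x) = x"
      using clos w iv nbV unfolding S_def invol_def by blast
    have "2 * k = sum l S + sum (\<lambda>u. l (t u)) S" using sum_invol[OF tS, of l] wk w S_def by simp
    also have "\<dots> = sum (\<lambda>u. l u + l (t u)) S" by (simp add: sum.distrib)
    also have "\<dots> = sum (\<lambda>u. N + 1) S"
    proof (rule sum.cong)
      fix u assume "u \<in> S"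
      hence u: "u \<in> V" using nbV S_def by auto
      have "l u \<in> {1..N}" using bij u bij_betwE by blast
      thus "l u + l (t u) = N + 1" using T[OF u] by auto
    qed simp
    finally have e: "2 * k = card S * (N + 1)" by simp
    have "2 * k div (N + 1) = card S" unfolding e by (rule div_mult_self_is_m) simp
    thus "card (nbhd V E w) = 2 * k div (N + 1)" using S_def by metis
  qed
  ultimately show ?thesis by blast
qed

lemma char_dir2:
  assumes g: "sgraph V E" and r: "regular V E" and c: "\<forall>x\<in>V. even (card (cls V E x))"
  shows "balanced_distance_magic V E"
proof -
  have fin: "finite V" using g unfolding sgraph_def by blast
  have sym: "\<And>x y. x \<in> V \<Longrightarrow> y \<in> V \<Longrightarrow> E x y \<Longrightarrow> E y x"
    using g unfolding sgraph_def by auto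
  define N where "N = card V"
  obtain r0 where r0: "\<forall>x\<in>V. card (nbhd V E x) = r0" using r unfolding regular_def by blast
  define F where "F C = (SOME f. invol C f)" for C :: "'a set"
  define t where "t y = F (cls V E y) y" for y
  have Fi: "invol (cls V E y) (F (cls V E y))" if "y \<in> V" for y
  proof -
    have "finite (cls V E y)" using fin unfolding cls_def by simp
    hence "\<exists>f. invol (cls V E y) f" using even_inv[OF _ c[rule_format, OF that]] by simp
    thus ?thesis unfolding F_def by (rule someI_ex)
  qed
  have yc: "y \<in> cls V E y" if "y \<in> V" for y using that unfolding cls_def by simp
  have clseq: "cls V E z = cls V E y" if "z \<in> cls V E y" for z y
    using that unfolding cls_def by auto
  have iv: "invol V t" unfolding invol_def
  proof
    fix y assume y: "y \<in> V"
    have A: "t y \<in> cls V E y" "t y \<noteq> y" "F (cls V E y) (t y) = y"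
      using Fi[OF y] yc[OF y] unfolding invol_def t_def by auto
    have "t (t y) = y" using A(1,3) clseq[OF A(1)] unfolding t_def by simp
    thus "t y \<in> V \<and> t y \<noteq> y \<and> t (t y) = y" using A unfolding cls_def by auto
  qed
  have nbt: "nbhd V E (t y) = nbhd V E y" if "y \<in> V" for y
    using Fi[OF that] yc[OF that] unfolding invol_def t_def cls_def by auto
  obtain l where l: "bij_betw l V {1..N}" "\<forall>u\<in>V. l (t u) = N + 1 - l u"
    using inv_label[OF fin iv] N_def by blast
  have evN: "even N" using inv_even[OF fin iv] N_def by simp
  have nbV: "nbhd V E w \<subseteq> V" for w unfolding nbhd_def by auto
  have clos: "t u \<in> nbhd V E w" if w: "w \<in> V" and u: "u \<in> nbhd V E w" for u w
  proof -
    have uV: "u \<in> V" "E w u" using u unfolding nbhd_def by auto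
    hence "w \<in> nbhd V E u" using sym[OF w uV(1)] w unfolding nbhd_def by auto
    hence "w \<in> nbhd V E (t u)" using nbt uV by simp
    moreover have "t u \<in> V" using iv[unfolded invol_def] uV(1) by simp
    ultimately have "E (t u) w" "t u \<in> V" unfolding nbhd_def by auto
    thus ?thesis using sym[OF \<open>t u \<in> V\<close> w] unfolding nbhd_def by auto
  qed
  have wt: "(\<Sum>y\<in>nbhd V E w. l y) = r0 * (N + 1) div 2" if w: "w \<in> V" for w
  proof -
    define S where "S = nbhd V E w"
    have tS: "\<And>x. x \<in> S \<Longrightarrow> t x \<in> S \<and> t (t x) = x"
      using clos w iv nbV unfolding S_def invol_def by blast
    have "2 * sum l S = sum l S + sum (\<lambda>u. l (t u)) S" using sum_invol[OF tS, of l] by simp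
    also have "\<dots> = sum (\<lambda>u. l u + l (t u)) S" by (simp add: sum.distrib)
    also have "\<dots> = sum (\<lambda>u. N + 1) S"
    proof (rule sum.cong)
      fix u assume "u \<in> S"
      hence u: "u \<in> V" using nbV S_def by auto
      have "l u \<in> {1..N}" using l(1) u bij_betwE by blast
      thus "l u + l (t u) = N + 1" using l(2) u by auto
    qed simp
    finally have "2 * sum l S = r0 * (N + 1)" using r0 w S_def by simp
    thus ?thesis using S_def by simp
  qed
  have "balanced_dm_labeling V E l"
    unfolding balanced_dm_labeling_def distance_magic_labeling_def
  proof (intro conjI)
    show "even (card V)" using evN N_def by simp
    show "bij_betw l V {1..card V}" using l N_def by simp
    show "\<exists>k. \<forall>x\<in>V. (\<Sum>y\<in>nbhd V E x. l y) = k" using wt by blast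
    show "\<forall>w\<in>V. \<forall>u\<in>nbhd V E w. \<exists>v\<in>nbhd V E w. l v = card V + 1 - l u"
      using clos l(2) nbV N_def by blast
  qed
  thus ?thesis using evN N_def unfolding balanced_distance_magic_def by blast
qed

lemma char:
  assumes "sgraph V E"
  shows "balanced_distance_magic V E \<longleftrightarrow> regular V E \<and> (\<forall>x\<in>V. even (card (cls V E x)))"
  using char_dir1 char_dir2 assms by blast


lemma lex_graph:
  assumes "graph VG EG" "graph VH EH"
  shows "sgraph (lex_V VG VH) (lex_E EG EH)"
  using assms unfolding graph_def sgraph_def lex_V_def lex_E_def by auto

lemma graph_sgraph: "graph V E \<Longrightarrow> sgraph V E"
  unfolding graph_def sgraph_def by auto

lemma lex_nbhd:
  assumes G: "graph VG EG" and H: "graph VH EH" and g: "g \<in> VG"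
  shows "nbhd (lex_V VG VH) (lex_E EG EH) (g, h) = nbhd VG EG g \<times> VH \<union> {g} \<times> nbhd VH EH h"
  using G H g unfolding graph_def lex_V_def lex_E_def nbhd_def by auto

lemma card_lex_nbhd:
  assumes G: "graph VG EG" and H: "graph VH EH" and g: "g \<in> VG"
  shows "card (nbhd (lex_V VG VH) (lex_E EG EH) (g, h)) = card (nbhd VG EG g) * card VH + card (nbhd VH EH h)"
proof -
  have fG: "finite (nbhd VG EG g)" using G unfolding graph_def nbhd_def by auto
  have fH: "finite VH" "finite (nbhd VH EH h)" using H unfolding graph_def nbhd_def by auto
  have dis: "(nbhd VG EG g \<times> VH) \<inter> ({g} \<times> nbhd VH EH h) = {}"
    using G unfolding graph_def nbhd_def by auto
  show ?thesis unfolding lex_nbhd[OF G H g]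
    by (subst card_Un_disjoint) (use fG fH dis in \<open>auto simp: card_cartesian_product\<close>)
qed

lemma lex_regular:
  assumes G: "graph VG EG" and H: "graph VH EH" and rG: "regular VG EG"
  shows "regular (lex_V VG VH) (lex_E EG EH) \<longleftrightarrow> regular VH EH"
proof -
  obtain r where r: "\<forall>x\<in>VG. card (nbhd VG EG x) = r" using rG unfolding regular_def by blast
  obtain g0 where g0: "g0 \<in> VG" using G unfolding graph_def by blast
  show ?thesis
  proof
    assume "regular (lex_V VG VH) (lex_E EG EH)"
    then obtain R where R: "\<forall>p\<in>lex_V VG VH. card (nbhd (lex_V VG VH) (lex_E EG EH) p) = R"
      unfolding regular_def by blast
    have "card (nbhd VH EH h) = R - r * card VH" if h: "h \<in> VH" for h
    proof -
      have "(g0, h) \<in> lex_V VG VH" using g0 h unfolding lex_V_def by simp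
      hence "R = r * card VH + card (nbhd VH EH h)"
        using R card_lex_nbhd[OF G H g0, of h] r g0 by simp
      thus ?thesis by simp
    qed
    thus "regular VH EH" unfolding regular_def by blast
  next
    assume "regular VH EH"
    then obtain s where s: "\<forall>x\<in>VH. card (nbhd VH EH x) = s" unfolding regular_def by blast
    have "card (nbhd (lex_V VG VH) (lex_E EG EH) p) = r * card VH + s" if p: "p \<in> lex_V VG VH" for p
    proof -
      obtain g h where gh: "p = (g, h)" "g \<in> VG" "h \<in> VH" using p unfolding lex_V_def by auto
      show ?thesis using card_lex_nbhd[OF G H gh(2), of h] gh r s by simp
    qed
    thus "regular (lex_V VG VH) (lex_E EG EH)" unfolding regular_def by blast
  qed
qed

lemma lex_nbhd_eq_pos:
  assumes G: "graph VG EG" and H: "graph VH EH" and g: "g \<in> VG" and g': "g' \<in> VG"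
    and h: "h \<in> VH" and h': "h' \<in> VH" and ne: "nbhd VH EH h \<noteq> {}"
  shows "nbhd (lex_V VG VH) (lex_E EG EH) (g', h') = nbhd (lex_V VG VH) (lex_E EG EH) (g, h)
    \<longleftrightarrow> g' = g \<and> nbhd VH EH h' = nbhd VH EH h"
proof
  assume eq: "nbhd (lex_V VG VH) (lex_E EG EH) (g', h') = nbhd (lex_V VG VH) (lex_E EG EH) (g, h)"
  note e = eq[unfolded lex_nbhd[OF G H g] lex_nbhd[OF G H g']]
  have ng: "g \<notin> nbhd VG EG g" using G unfolding graph_def nbhd_def by auto
  have nh: "h \<notin> nbhd VH EH h" using H unfolding graph_def nbhd_def by auto
  have gg: "g' = g"
  proof (rule ccontr)
    assume ne': "g' \<noteq> g"
    obtain x where x: "x \<in> nbhd VH EH h" using ne by blast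
    have "(g, x) \<in> nbhd VG EG g' \<times> VH \<union> {g'} \<times> nbhd VH EH h'" using e x by auto
    hence "g \<in> nbhd VG EG g'" using ne' by auto
    hence "(g, h) \<in> nbhd VG EG g' \<times> VH \<union> {g'} \<times> nbhd VH EH h'" using h by auto
    hence "(g, h) \<in> nbhd VG EG g \<times> VH \<union> {g} \<times> nbhd VH EH h" using e by simp
    thus False using ng nh by auto
  qed
  moreover have "nbhd VH EH h' = nbhd VH EH h"
  proof (rule set_eqI)
    fix x
    have A: "(g, x) \<in> nbhd VG EG g \<times> VH \<union> {g} \<times> nbhd VH EH h' \<longleftrightarrow> x \<in> nbhd VH EH h'" using ng by auto
    have B: "(g, x) \<in> nbhd VG EG g \<times> VH \<union> {g} \<times> nbhd VH EH h \<longleftrightarrow> x \<in> nbhd VH EH h" using ng by auto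
    have eq2: "nbhd VG EG g \<times> VH \<union> {g} \<times> nbhd VH EH h' = nbhd VG EG g \<times> VH \<union> {g} \<times> nbhd VH EH h"
      using e gg by simp
    have C: "(g, x) \<in> nbhd VG EG g \<times> VH \<union> {g} \<times> nbhd VH EH h' \<longleftrightarrow> (g, x) \<in> nbhd VG EG g \<times> VH \<union> {g} \<times> nbhd VH EH h"
      by (simp only: eq2)
    show "x \<in> nbhd VH EH h' \<longleftrightarrow> x \<in> nbhd VH EH h" using A B C by blast
  qed
  ultimately show "g' = g \<and> nbhd VH EH h' = nbhd VH EH h" by simp
next
  assume "g' = g \<and> nbhd VH EH h' = nbhd VH EH h"
  thus "nbhd (lex_V VG VH) (lex_E EG EH) (g', h') = nbhd (lex_V VG VH) (lex_E EG EH) (g, h)"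
    using lex_nbhd[OF G H g] lex_nbhd[OF G H g'] by simp
qed

lemma cls_lex_pos:
  assumes G: "graph VG EG" and H: "graph VH EH" and g: "g \<in> VG"
    and h: "h \<in> VH" and ne: "nbhd VH EH h \<noteq> {}"
  shows "cls (lex_V VG VH) (lex_E EG EH) (g, h) = {g} \<times> cls VH EH h"
proof (rule set_eqI)
  fix p :: "'a \<times> 'b"
  obtain g' h' where p: "p = (g', h')" by (cases p)
  show "p \<in> cls (lex_V VG VH) (lex_E EG EH) (g, h) \<longleftrightarrow> p \<in> {g} \<times> cls VH EH h"
  proof (cases "g' \<in> VG \<and> h' \<in> VH")
    case True
    thus ?thesis using lex_nbhd_eq_pos[OF G H g _ h _ ne, of g' h'] p g
      unfolding cls_def lex_V_def by auto
  next
    case False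
    thus ?thesis using p g unfolding cls_def lex_V_def by auto
  qed
qed

lemma cls_lex_zero:
  assumes G: "graph VG EG" and H: "graph VH EH" and g: "g \<in> VG" and h: "h \<in> VH"
    and z: "\<forall>h\<in>VH. nbhd VH EH h = {}"
  shows "cls (lex_V VG VH) (lex_E EG EH) (g, h) = cls VG EG g \<times> VH"
proof (rule set_eqI)
  fix p :: "'a \<times> 'b"
  obtain g' h' where p: "p = (g', h')" by (cases p)
  have ne: "VH \<noteq> {}" using H unfolding graph_def by blast
  show "p \<in> cls (lex_V VG VH) (lex_E EG EH) (g, h) \<longleftrightarrow> p \<in> cls VG EG g \<times> VH"
  proof (cases "g' \<in> VG \<and> h' \<in> VH")
    case True
    have "nbhd VH EH h = {}" "nbhd VH EH h' = {}"
      using z True h by simp_all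
    hence "nbhd (lex_V VG VH) (lex_E EG EH) (g', h') = nbhd (lex_V VG VH) (lex_E EG EH) (g, h)
      \<longleftrightarrow> nbhd VG EG g' = nbhd VG EG g"
      using lex_nbhd[OF G H g] lex_nbhd[OF G H conjunct1[OF True]] ne by (auto simp add: times_eq_iff)
    thus ?thesis using p g True unfolding cls_def lex_V_def by auto
  next
    case False
    thus ?thesis using p g unfolding cls_def lex_V_def by auto
  qed
qed


theorem mainTheorem3:
  fixes VG :: "'a set" and EG :: "'a \<Rightarrow> 'a \<Rightarrow> bool"
    and VH :: "'b set" and EH :: "'b \<Rightarrow> 'b \<Rightarrow> bool"
  assumes "graph VG EG" and "graph VH EH"
    and "regular VG EG"
    and "\<forall>n. odd n \<longrightarrow> \<not> graph_iso VH EH (edgeless_V n) edgeless_E"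
  shows "balanced_distance_magic (lex_V VG VH) (lex_E EG EH) \<longleftrightarrow>
         balanced_distance_magic VH EH"
proof -
  note G = assms(1) and H = assms(2)
  have L: "balanced_distance_magic (lex_V VG VH) (lex_E EG EH) \<longleftrightarrow>
     regular (lex_V VG VH) (lex_E EG EH) \<and>
     (\<forall>p\<in>lex_V VG VH. even (card (cls (lex_V VG VH) (lex_E EG EH) p)))"
    by (rule char[OF lex_graph[OF G H]])
  have R: "balanced_distance_magic VH EH \<longleftrightarrow> regular VH EH \<and> (\<forall>h\<in>VH. even (card (cls VH EH h)))"
    by (rule char[OF graph_sgraph[OF H]])
  have reg: "regular (lex_V VG VH) (lex_E EG EH) \<longleftrightarrow> regular VH EH"
    by (rule lex_regular[OF G H assms(3)])
  have finH: "finite VH" using H unfolding graph_def by blast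
  have finG: "finite VG" using G unfolding graph_def by blast
  obtain g0 where g0: "g0 \<in> VG" using G unfolding graph_def by blast
  have key: "(\<forall>p\<in>lex_V VG VH. even (card (cls (lex_V VG VH) (lex_E EG EH) p))) \<longleftrightarrow>
      (\<forall>h\<in>VH. even (card (cls VH EH h)))" if rH: "regular VH EH"
  proof -
    obtain s where s: "\<forall>h\<in>VH. card (nbhd VH EH h) = s" using rH unfolding regular_def by blast
    have finN: "finite (nbhd VH EH h)" for h using finH unfolding nbhd_def by simp
    show ?thesis
    proof (cases "s = 0")
      case True
      have z: "\<forall>h\<in>VH. nbhd VH EH h = {}" using s True finN by simp
      have clsH: "cls VH EH h = VH" if "h \<in> VH" for h
        using z that unfolding cls_def by auto
      have noE: "\<not> EH x y" if "x \<in> VH" "y \<in> VH" for x y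
      proof
        assume "EH x y" hence "y \<in> nbhd VH EH x" using that unfolding nbhd_def by simp
        thus False using z that by simp
      qed
      have evH: "even (card VH)"
      proof (rule ccontr)
        assume od: "odd (card VH)"
        obtain f where f: "bij_betw f VH {0..<card VH}" using ex_bij_betw_finite_nat[OF finH] by blast
        have "{0..<card VH} = edgeless_V (card VH)" unfolding edgeless_V_def by auto
        hence "graph_iso VH EH (edgeless_V (card VH)) edgeless_E"
          unfolding graph_iso_def using f noE unfolding edgeless_E_def by auto
        thus False using assms(4) od by blast
      qed
      have lhs: "\<forall>p\<in>lex_V VG VH. even (card (cls (lex_V VG VH) (lex_E EG EH) p))"
      proof
        fix p assume p: "p \<in> lex_V VG VH"
        obtain g h where gh: "p = (g, h)" "g \<in> VG" "h \<in> VH" using p unfolding lex_V_def by auto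
        have "card (cls (lex_V VG VH) (lex_E EG EH) p) = card (cls VG EG g) * card VH"
          using cls_lex_zero[OF G H gh(2) gh(3) z] gh(1) by (simp add: card_cartesian_product)
        thus "even (card (cls (lex_V VG VH) (lex_E EG EH) p))" using evH by simp
      qed
      have rhs: "\<forall>h\<in>VH. even (card (cls VH EH h))" using clsH evH by simp
      show ?thesis using lhs rhs by blast
    next
      case False
      have ne: "nbhd VH EH h \<noteq> {}" if "h \<in> VH" for h using s False that by fastforce
      have cc: "card (cls (lex_V VG VH) (lex_E EG EH) (g, h)) = card (cls VH EH h)"
        if "g \<in> VG" "h \<in> VH" for g h
        using cls_lex_pos[OF G H that ne[OF that(2)]] by (simp add: card_cartesian_product)
      show ?thesis
      proof
        assume a: "\<forall>p\<in>lex_V VG VH. even (card (cls (lex_V VG VH) (lex_E EG EH) p))"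
        show "\<forall>h\<in>VH. even (card (cls VH EH h))"
        proof
          fix h assume h: "h \<in> VH"
          have "(g0, h) \<in> lex_V VG VH" using g0 h unfolding lex_V_def by simp
          thus "even (card (cls VH EH h))" using a cc[OF g0 h] by metis
        qed
      next
        assume a: "\<forall>h\<in>VH. even (card (cls VH EH h))"
        show "\<forall>p\<in>lex_V VG VH. even (card (cls (lex_V VG VH) (lex_E EG EH) p))"
        proof
          fix p assume p: "p \<in> lex_V VG VH"
          obtain g h where gh: "p = (g, h)" "g \<in> VG" "h \<in> VH" using p unfolding lex_V_def by auto
          show "even (card (cls (lex_V VG VH) (lex_E EG EH) p))" using a cc[OF gh(2,3)] gh(1,3) by simp
        qed
      qed
    qed
  qed
  show ?thesis
  proof
    assume "balanced_distance_magic (lex_V VG VH) (lex_E EG EH)"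
    hence "regular VH EH" "\<forall>p\<in>lex_V VG VH. even (card (cls (lex_V VG VH) (lex_E EG EH) p))"
      using L reg by auto
    thus "balanced_distance_magic VH EH" using R key by blast
  next
    assume "balanced_distance_magic VH EH"
    hence "regular VH EH" "\<forall>h\<in>VH. even (card (cls VH EH h))" using R by auto
    thus "balanced_distance_magic (lex_V VG VH) (lex_E EG EH)" using L reg key by blast
  qed
qed

end
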